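(* Let $N\in\mathbb N$, $\alpha,\beta>-1$, let $x_0<\dots<x_N$ be the JGL nodes with Lagrange basis $h_0,\dots,h_N$, and let $\mu\in(k-1,k)$ with $k\in\mathbb N$. Then $$ {}^R\hat{\mathbf D}^{(\mu)}=\breve{\mathbf D}^{(k)}\,\hat{\mathbf I}^{(k-\mu)}, $$ where $\breve{\mathbf D}^{(k)}_{ij}=(1+x)^\mu D^k\{(1+x)^{k-\mu}h_j(x)\}\big|_{x=x_i}$ for $0\le i,j\le N$. In particular, for $k=1$, $\breve{\mathbf D}^{(1)}=(1-\mu)\mathbf I_{N+1}+\operatorname{diag}(1+x_0,\dots,1+x_N)\,\mathbf D$, where $\mathbf D_{ij}=h_j'(x_i)$.
   Context: For $\rho>0$, $(I_-^\rho u)(x)=\frac{1}{\Gamma(\rho)}\int_{-1}^x (x-y)^{\rho-1}u(y)\,dy$, $D^k=d^k/dx^k$; for $\mu\in(k-1,k)$ the Riemann–Liouville derivative is ${}^R D_-^\mu u=D^k(I_-^{k-\mu}u)$. Modified operators: $\hat I_-^\mu u=(1+x)^{-\mu}I_-^\mu u$ and ${}^R\hat D_-^\mu u=(1+x)^{\mu}\,{}^R D_-^\mu u$; applied to polynomials these give polynomials, whose values at $x=-1$ are taken. The JGL nodes $x_0<\dots<x_N$ are the zeros of $(1-x^2)\frac{d}{dx}P_N^{(\alpha,\beta)}$ (Jacobi polynomial, Szegő normalization), and $h_j\in\mathcal P_N$ satisfies $h_j(x_i)=\delta_{ij}$. The matrices are ${}^R\hat{\mathbf D}^{(\mu)}_{ij}=({}^R\hat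 D_-^\mu h_j)(x_i)$ and $\hat{\mathbf I}^{(\nu)}_{ij}=(\hat I_-^\nu h_j)(x_i)$, $0\le i,j\le N$. *)

theory Defs
  imports "HOL-Analysis.Analysis" "HOL-Computational_Algebra.Polynomial"
begin

text \<open>Jacobi polynomial in Szego normalization:
  P_n^(a,b)(x) = sum_{m=0}^n C(n+a, n-m) C(n+b, m) ((x-1)/2)^m ((x+1)/2)^(n-m).\<close>
definition jacobi_poly :: "nat \<Rightarrow> real \<Rightarrow> real \<Rightarrow> real poly" where
  "jacobi_poly n a b =
     (\<Sum>m\<le>n. smult (((real n + a) gchoose (n - m)) * ((real n + b) gchoose m))
                 ([:-1/2, 1/2:] ^ m * [:1/2, 1/2:] ^ (n - m)))"

definition JGL_nodes :: "nat \<Rightarrow> real \<Rightarrow> real \<Rightarrow> real set" where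
  "JGL_nodes N a b = {t. poly ([:1, 0, -1:] * pderiv (jacobi_poly N a b)) t = 0}"

definition RL_int :: "real \<Rightarrow> (real \<Rightarrow> real) \<Rightarrow> real \<Rightarrow> real" where
  "RL_int \<rho> u x = integral {-1..x} (\<lambda>y. (x - y) powr (\<rho> - 1) * u y) / Gamma \<rho>"

definition RL_deriv :: "real \<Rightarrow> (real \<Rightarrow> real) \<Rightarrow> real \<Rightarrow> real" where
  "RL_deriv \<mu> u = (deriv ^^ nat \<lceil>\<mu>\<rceil>) (RL_int (real (nat \<lceil>\<mu>\<rceil>) - \<mu>) u)"

definition ext_left :: "(real \<Rightarrow> real) \<Rightarrow> real \<Rightarrow> real" where
  "ext_left f x = (if x = -1 then Lim (at_right (-1)) f else f x)"

definition hat_RL_int :: "real \<Rightarrow> (real \<Rightarrow> real) \<Rightarrow> real \<Rightarrow> real" where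
  "hat_RL_int \<rho> u = ext_left (\<lambda>x. (1 + x) powr (- \<rho>) * RL_int \<rho> u x)"

definition hat_RL_deriv :: "real \<Rightarrow> (real \<Rightarrow> real) \<Rightarrow> real \<Rightarrow> real" where
  "hat_RL_deriv \<mu> u = ext_left (\<lambda>x. (1 + x) powr \<mu> * RL_deriv \<mu> u x)"

definition hatD_mat :: "real \<Rightarrow> (nat \<Rightarrow> real) \<Rightarrow> (nat \<Rightarrow> real poly) \<Rightarrow> nat \<Rightarrow> nat \<Rightarrow> real" where
  "hatD_mat \<mu> x h i j = hat_RL_deriv \<mu> (poly (h j)) (x i)"

definition hatI_mat :: "real \<Rightarrow> (nat \<Rightarrow> real) \<Rightarrow> (nat \<Rightarrow> real poly) \<Rightarrow> nat \<Rightarrow> nat \<Rightarrow> real" where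
  "hatI_mat \<nu> x h i j = hat_RL_int \<nu> (poly (h j)) (x i)"

definition brevD_mat :: "nat \<Rightarrow> real \<Rightarrow> (nat \<Rightarrow> real) \<Rightarrow> (nat \<Rightarrow> real poly) \<Rightarrow> nat \<Rightarrow> nat \<Rightarrow> real" where
  "brevD_mat k \<mu> x h i j =
     ext_left (\<lambda>t. (1 + t) powr \<mu> *
                 (deriv ^^ k) (\<lambda>s. (1 + s) powr (real k - \<mu>) * poly (h j) s) t) (x i)"

end

theory Submission imports Defs begin
lemma gchoose_pos:
  fixes r :: real
  assumes "r > real k - 1"
  shows "r gchoose k > 0"
proof -
  have "(r gchoose k) * fact k = (\<Prod>i = 0..<k. r - of_nat i)" by (rule gbinomial_mult_fact')
  moreover have "(\<Prod>i = 0..<k. r - of_nat i) > 0"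
    using assms by (intro prod_pos) auto
  ultimately show ?thesis
    by (metis fact_gt_zero zero_less_mult_pos2)
qed

lemma sgn_aux:
  fixes u v :: real
  assumes "u < 0" "v < 0" "i + j = e"
  shows "(-1)^e * (u^i * v^j) \<ge> 0"
proof -
  have e: "(-1::real)^e = (-1)^i * (-1)^j" using assms(3) power_add by metis
  have "(-1)^e * (u^i * v^j) = ((-1)^i * u^i) * ((-1)^j * v^j)"
    unfolding e by (simp add: algebra_simps)
  also have "\<dots> = (-u)^i * (-v)^j" by (simp add: power_mult_distrib[symmetric])
  also have "\<dots> \<ge> 0" using assms by simp
  finally show ?thesis .
qed

lemma poly_jacobi:
  "poly (jacobi_poly n a b) s =
     (\<Sum>m\<le>n. (((real n + a) gchoose (n - m)) * ((real n + b) gchoose m)) *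
        (((s - 1)/2) ^ m * ((s + 1)/2) ^ (n - m)))"
  unfolding jacobi_poly_def by (simp add: poly_sum algebra_simps diff_divide_distrib add_divide_distrib)

lemma jacobi_deriv_nonzero:
  assumes n: "n \<ge> 1" and a: "a > -1" and b: "b > -1" and t: "t < -1"
  shows "poly (pderiv (jacobi_poly n a b)) t \<noteq> 0"
proof -
  define c where "c m = ((real n + a) gchoose (n - m)) * ((real n + b) gchoose m)" for m
  define u where "u = (t - 1)/2"
  define v where "v = (t + 1)/2"
  define D where "D = (\<Sum>m\<le>n. c m * (of_nat m * u ^ (m - 1) * (1/2) * v ^ (n - m)
                 + u ^ m * (of_nat (n - m) * v ^ (n - m - 1) * (1/2))))"
  have "((\<lambda>s. (\<Sum>m\<le>n. c m * (((s - 1)/2) ^ m * ((s + 1)/2) ^ (n - m))))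
          has_real_derivative D) (at t)"
    unfolding D_def u_def v_def
    apply (auto intro!: derivative_eq_intros)
    apply (intro sum.cong refl)
    apply (auto simp: algebra_simps of_nat_diff)
    done
  moreover have "(poly (jacobi_poly n a b) has_real_derivative poly (pderiv (jacobi_poly n a b)) t) (at t)"
    by (rule poly_DERIV)
  ultimately have eq: "poly (pderiv (jacobi_poly n a b)) t = D"
    unfolding poly_jacobi[abs_def] c_def using DERIV_unique by blast
  have cpos: "c m > 0" if "m \<le> n" for m
    unfolding c_def using that a b
    by (intro mult_pos_pos gchoose_pos) auto
  have u0: "u < 0" and v0: "v < 0" using t by (auto simp: u_def v_def)
  define f where "f m = c m * (of_nat m * u ^ (m - 1) * (1/2) * v ^ (n - m)
                 + u ^ m * (of_nat (n - m) * v ^ (n - m - 1) * (1/2)))" for m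
  have fnn: "(-1)^(n-1) * f m \<ge> 0" if "m \<le> n" for m
  proof -
    have A: "(-1)^(n-1) * (of_nat m * u ^ (m - 1) * (1/2) * v ^ (n - m)) \<ge> 0"
    proof (cases "m = 0")
      case False
      have "(-1)^(n-1) * (u ^ (m - 1) * v ^ (n - m)) \<ge> 0"
        using sgn_aux[OF u0 v0, of "m-1" "n-m" "n-1"] False that by simp
      then show ?thesis by (simp add: algebra_simps mult_nonneg_nonneg)
    qed simp
    have B: "(-1)^(n-1) * (u ^ m * (of_nat (n - m) * v ^ (n - m - 1) * (1/2))) \<ge> 0"
    proof (cases "m = n")
      case False
      have X: "(-1)^(n-1) * (u ^ m * v ^ (n - m - 1)) \<ge> 0"
        using sgn_aux[OF u0 v0, of "m" "n-m-1" "n-1"] False that by simp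
      have eq: "(-1)^(n-1) * (u ^ m * (of_nat (n - m) * v ^ (n - m - 1) * (1/2)))
          = (of_nat (n - m) / 2) * ((-1)^(n-1) * (u ^ m * v ^ (n - m - 1)))"
        by (simp add: algebra_simps)
      show ?thesis unfolding eq using X by (simp only: mult_nonneg_nonneg divide_nonneg_pos of_nat_0_le_iff zero_less_numeral)
    qed simp
    have "(-1)^(n-1) * f m = c m * ((-1)^(n-1) * (of_nat m * u ^ (m - 1) * (1/2) * v ^ (n - m))
          + (-1)^(n-1) * (u ^ m * (of_nat (n - m) * v ^ (n - m - 1) * (1/2))))"
      unfolding f_def by (simp add: algebra_simps)
    also have "\<dots> \<ge> 0" using A B cpos[OF that] by simp
    finally show ?thesis .
  qed
  have fpos: "(-1)^(n-1) * f n > 0"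
  proof -
    have "(-1)^(n-1) * (u ^ (n - 1)) \<ge> 0"
      using sgn_aux[OF u0 v0, of "n-1" 0 "n-1"] by simp
    moreover have "(-1)^(n-1) * (u ^ (n - 1)) \<noteq> 0" using u0 by simp
    ultimately have P: "(-1)^(n-1) * (u ^ (n - 1)) > 0" by linarith
    have eq: "(-1)^(n-1) * f n = c n * (of_nat n * (1/2) * ((-1)^(n-1) * (u ^ (n - 1))))"
      unfolding f_def by (simp add: algebra_simps)
    have n2: "0 < of_nat n * (1/2::real)" using n by simp
    show ?thesis unfolding eq
      by (rule mult_pos_pos[OF cpos[of n] mult_pos_pos[OF n2 P]]) simp
  qed
  have "(-1)^(n-1) * D = (\<Sum>m\<le>n. (-1)^(n-1) * f m)"
    unfolding D_def f_def by (simp add: sum_distrib_left)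
  also have "\<dots> \<ge> (-1)^(n-1) * f n"
    by (rule member_le_sum) (use fnn in auto)
  finally have "(-1)^(n-1) * D > 0" using fpos by linarith
  then have "D \<noteq> 0" by auto
  then show ?thesis using eq by simp
qed

lemma JGL_ge:
  assumes "n \<ge> 1" "a > -1" "b > -1" "t \<in> JGL_nodes n a b"
  shows "t \<ge> -1"
proof (rule ccontr)
  assume "\<not> t \<ge> -1"
  then have t: "t < -1" by simp
  have "poly [:1, 0, -1:] t \<noteq> 0"
  proof -
    have "(-t) * (-t) > 1 * 1" using t by (intro mult_strict_mono) auto
    then show ?thesis by simp
  qed
  with jacobi_deriv_nonzero[OF assms(1-3) t] assms(4) show False
    by (simp add: JGL_nodes_def)
qed

lemma mono_int:
  fixes \<nu> x :: real
  assumes nu: "\<nu> > 0" and x: "x > -1"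
  shows "((\<lambda>y. (x - y) powr (\<nu> - 1) * (1 + y) ^ m) has_integral
            ((1 + x) powr \<nu> * (1 + x) ^ m * Beta (real m + 1) \<nu>)) {-1..x}"
proof -
  define L where "L = 1 + x"
  have L: "L > 0" using x by (simp add: L_def)
  define B where "B = Beta (real m + 1) \<nu>"
  have B0: "((\<lambda>t. t powr (real m + 1 - 1) * (1 - t) powr (\<nu> - 1)) has_integral B) {0..1}"
    unfolding B_def by (rule has_integral_Beta_real) (use nu in auto)
  have B1: "((\<lambda>t. t ^ m * (1 - t) powr (\<nu> - 1)) has_integral B) (cbox 0 1)"
    using B0 unfolding cbox_interval
    by (subst has_integral_spike_finite_eq[of "{0}"]) (auto simp: powr_realpow)
  have B2: "((\<lambda>y. (\<lambda>t. t ^ m * (1 - t) powr (\<nu> - 1)) ((1/L) *\<^sub>R y + 1/L)) has_integral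
      (B /\<^sub>R (1/L) ^ DIM(real))) (cbox ((0 - 1/L) /\<^sub>R (1/L)) ((1 - 1/L) /\<^sub>R (1/L)))"
    by (rule has_integral_affinity'[OF B1]) (use L in simp)
  have box: "cbox ((0 - 1/L) /\<^sub>R (1/L)) ((1 - 1/L) /\<^sub>R (1/L)) = {-1..x}"
    using L by (simp add: cbox_interval L_def field_simps)
  have B3: "((\<lambda>y. ((1 + y) / L) ^ m * ((x - y) / L) powr (\<nu> - 1)) has_integral (B * L)) {-1..x}"
  proof -
    have "(\<lambda>y. (\<lambda>t. t ^ m * (1 - t) powr (\<nu> - 1)) ((1/L) *\<^sub>R y + 1/L))
        = (\<lambda>y. ((1 + y) / L) ^ m * ((x - y) / L) powr (\<nu> - 1))"
    proof (rule ext)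
      fix y
      have e1: "(1/L) *\<^sub>R y + 1/L = (1 + y) / L" by (simp add: add_divide_distrib)
      have e2: "1 - (1 + y) / L = (x - y) / L" using L by (simp add: L_def field_simps)
      show "(\<lambda>t. t ^ m * (1 - t) powr (\<nu> - 1)) ((1/L) *\<^sub>R y + 1/L)
        = ((1 + y) / L) ^ m * ((x - y) / L) powr (\<nu> - 1)" unfolding e1 e2 ..
    qed
    moreover have "B /\<^sub>R (1/L) ^ DIM(real) = B * L" by simp
    moreover note B2
    ultimately show ?thesis by (simp only: box)
  qed
  define K where "K = L ^ m * L powr (\<nu> - 1)"
  have B4: "((\<lambda>y. K * (((1 + y) / L) ^ m * ((x - y) / L) powr (\<nu> - 1))) has_integral (K * (B * L))) {-1..x}"
    by (rule has_integral_mult_right[OF B3])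
  have eq: "K * (((1 + y) / L) ^ m * ((x - y) / L) powr (\<nu> - 1)) = (x - y) powr (\<nu> - 1) * (1 + y) ^ m"
    for y
    using L unfolding K_def by (simp add: powr_divide power_divide field_simps)
  have val: "K * (B * L) = (1 + x) powr \<nu> * (1 + x) ^ m * Beta (real m + 1) \<nu>"
  proof -
    have "L powr (\<nu> - 1) * L = L powr \<nu>"
      using L by (simp add: powr_diff field_simps)
    then show ?thesis unfolding K_def B_def L_def[symmetric] by (simp add: algebra_simps)
  qed
  show ?thesis using B4 unfolding eq val .
qed

definition Qp :: "real \<Rightarrow> real poly \<Rightarrow> real poly" where
  "Qp \<nu> p = (\<Sum>i\<le>degree p. smult (coeff (p \<circ>\<^sub>p [:-1, 1:]) i * Beta (real i + 1) \<nu> / Gamma \<nu>) ([:1, 1:] ^ i))"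

lemma degree_Qp: "degree (Qp \<nu> p) \<le> degree p"
  unfolding Qp_def
  by (rule degree_sum_le) (auto intro: order.trans[OF degree_smult_le] simp: degree_linear_power)

lemma poly_shift: "poly p (y::real) = (\<Sum>i\<le>degree p. coeff (p \<circ>\<^sub>p [:-1, 1:]) i * (1 + y) ^ i)"
proof -
  have h: "poly [:-1, 1:] (1+y) = y" by simp
  have "poly p y = poly (p \<circ>\<^sub>p [:-1, 1:]) (1 + y)" by (simp only: poly_pcompose h)
  also have "\<dots> = (\<Sum>i\<le>degree (p \<circ>\<^sub>p [:-1, 1:]). coeff (p \<circ>\<^sub>p [:-1, 1:]) i * (1 + y) ^ i)"
    by (rule poly_altdef)
  also have "degree (p \<circ>\<^sub>p [:-1, 1:]) = degree p" by (simp add: degree_pcompose)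
  finally show ?thesis .
qed

lemma RL_poly:
  assumes nu: "\<nu> > 0" and x: "x > -1"
  shows "RL_int \<nu> (poly p) x = (1 + x) powr \<nu> * poly (Qp \<nu> p) x"
proof -
  define a where "a i = coeff (p \<circ>\<^sub>p [:-1, 1:]) i" for i
  have "((\<lambda>y. \<Sum>i\<le>degree p. a i * ((x - y) powr (\<nu> - 1) * (1 + y) ^ i)) has_integral
        (\<Sum>i\<le>degree p. a i * ((1 + x) powr \<nu> * (1 + x) ^ i * Beta (real i + 1) \<nu>))) {-1..x}"
    by (intro has_integral_sum has_integral_mult_right mono_int nu x) auto
  moreover have "(\<lambda>y. \<Sum>i\<le>degree p. a i * ((x - y) powr (\<nu> - 1) * (1 + y) ^ i))
      = (\<lambda>y. (x - y) powr (\<nu> - 1) * poly p y)"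
    by (intro ext) (simp add: poly_shift[of p] a_def sum_distrib_left algebra_simps)
  ultimately have "integral {-1..x} (\<lambda>y. (x - y) powr (\<nu> - 1) * poly p y) =
      (\<Sum>i\<le>degree p. a i * ((1 + x) powr \<nu> * (1 + x) ^ i * Beta (real i + 1) \<nu>))"
    by (simp add: integral_unique)
  then show ?thesis
    unfolding RL_int_def Qp_def a_def
    by (simp add: poly_sum sum_divide_distrib sum_distrib_left algebra_simps)
qed

definition T :: "real \<Rightarrow> real poly \<Rightarrow> real poly" where
  "T a p = smult a p + [:1, 1:] * pderiv p"

fun Tk :: "real \<Rightarrow> nat \<Rightarrow> real poly \<Rightarrow> real poly" where
  "Tk a 0 p = p"
| "Tk a (Suc k) p = T (a - real k) (Tk a k p)"

lemma Tk_add: "Tk a k (p + q) = Tk a k p + Tk a k q"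
  by (induction k) (simp_all add: T_def pderiv_add algebra_simps smult_add_right)

lemma T_smult: "T b (smult c p) = smult c (T b p)"
  by (simp add: T_def pderiv_smult smult_add_right ac_simps)

lemma Tk_smult: "Tk a k (smult c p) = smult c (Tk a k p)"
  by (induction k) (simp_all add: T_smult)

lemma Tk_zero: "Tk a k 0 = 0"
  by (induction k) (simp_all add: T_def pderiv_0)

lemma Tk_sum: "finite A \<Longrightarrow> Tk a k (\<Sum>l\<in>A. smult (c l) (f l)) = (\<Sum>l\<in>A. smult (c l) (Tk a k (f l)))"
  by (induction A rule: finite_induct) (simp_all add: Tk_zero Tk_add Tk_smult)

lemma D1:
  assumes s: "s > -1"
  shows "((\<lambda>s. (1 + s) powr a * poly p s) has_real_derivative
            (1 + s) powr (a - 1) * poly (T a p) s) (at s)"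
proof -
  have "((\<lambda>s. (1 + s) powr a * poly p s) has_real_derivative
         (a * (1 + s) powr (a - 1)) * poly p s + (1 + s) powr a * poly (pderiv p) s) (at s)"
    using s by (auto intro!: derivative_eq_intros poly_DERIV)
  moreover have "(1 + s) powr a = (1 + s) powr (a - 1) * (1 + s)"
    using s by (simp add: powr_diff)
  ultimately show ?thesis
    by (simp add: T_def algebra_simps)
qed

lemma Dk:
  assumes s: "s > -1"
  shows "(deriv ^^ k) (\<lambda>s. (1 + s) powr a * poly p s) s = (1 + s) powr (a - real k) * poly (Tk a k p) s"
  using s
proof (induction k arbitrary: s)
  case 0
  then show ?case by simp
next
  case (Suc k)
  have ev: "\<forall>\<^sub>F y in nhds s. (deriv ^^ k) (\<lambda>s. (1 + s) powr a * poly p s) y =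
              (1 + y) powr (a - real k) * poly (Tk a k p) y"
  proof -
    have "\<forall>\<^sub>F y in nhds s. y \<in> {-1<..}"
      by (rule eventually_nhds_in_open) (use Suc.prems in auto)
    then show ?thesis by eventually_elim (use Suc.IH in auto)
  qed
  have "(deriv ^^ Suc k) (\<lambda>s. (1 + s) powr a * poly p s) s
      = deriv ((deriv ^^ k) (\<lambda>s. (1 + s) powr a * poly p s)) s" by simp
  also have "\<dots> = deriv (\<lambda>y. (1 + y) powr (a - real k) * poly (Tk a k p) y) s"
    by (rule deriv_cong_ev[OF ev refl])
  also have "\<dots> = (1 + s) powr (a - real k - 1) * poly (T (a - real k) (Tk a k p)) s"
    by (rule DERIV_imp_deriv[OF D1]) (use Suc.prems in auto)
  finally show ?case by (simp add: algebra_simps)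
qed

lemma ext_at:
  assumes fg: "\<And>y. y > -1 \<Longrightarrow> f y = poly q y" and t: "t \<ge> -1"
  shows "ext_left f t = poly q t"
proof (cases "t = -1")
  case True
  have "(poly q \<longlongrightarrow> poly q (-1)) (at_right (-1))"
  proof -
    have "isCont (poly q) (-1)" by (rule DERIV_isCont[OF poly_DERIV])
    then have "(poly q \<longlongrightarrow> poly q (-1)) (at (-1))" by (simp add: isCont_def)
    then show ?thesis by (rule tendsto_mono[OF at_le[OF subset_UNIV]])
  qed
  then have "(f \<longlongrightarrow> poly q (-1)) (at_right (-1))"
  proof (rule tendsto_cong[THEN iffD1, rotated])
    show "\<forall>\<^sub>F y in at_right (-1). poly q y = f y"
      using eventually_at_right_less[of "-1::real"] by eventually_elim (simp add: fg)
  qed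
  then have "Lim (at_right (-1)) f = poly q (-1)"
    by (rule tendsto_Lim[OF trivial_limit_at_right_real])
  then show ?thesis using True by (simp add: ext_left_def)
next
  case False
  then show ?thesis using t fg by (simp add: ext_left_def)
qed

lemma interp:
  fixes x :: "nat \<Rightarrow> real"
  assumes inj: "inj_on x {0..N}" and deg: "degree r \<le> N"
    and hd: "\<And>j. j \<le> N \<Longrightarrow> degree (h j) \<le> N"
    and hx: "\<And>i j. i \<le> N \<Longrightarrow> j \<le> N \<Longrightarrow> poly (h j) (x i) = (if i = j then 1 else 0)"
  shows "r = (\<Sum>l\<le>N. smult (poly r (x l)) (h l))"
proof (rule ccontr)
  define d where "d = r - (\<Sum>l\<le>N. smult (poly r (x l)) (h l))"
  assume "r \<noteq> (\<Sum>l\<le>N. smult (poly r (x l)) (h l))"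
  then have d0: "d \<noteq> 0" by (simp add: d_def)
  have dd: "degree d \<le> N"
  proof -
    have "degree (\<Sum>l\<le>N. smult (poly r (x l)) (h l)) \<le> N"
      by (rule degree_sum_le) (auto intro: order.trans[OF degree_smult_le] hd)
    then show ?thesis unfolding d_def using deg degree_diff_le
      by (metis max.bounded_iff order_trans)
  qed
  have roots: "x ` {0..N} \<subseteq> {t. poly d t = 0}"
  proof
    fix t assume "t \<in> x ` {0..N}"
    then obtain i where i: "i \<le> N" "t = x i" by auto
    have "(\<Sum>l\<le>N. poly r (x l) * poly (h l) (x i)) = poly r (x i)"
    proof -
      have "(\<Sum>l\<le>N. poly r (x l) * poly (h l) (x i)) = (\<Sum>l\<le>N. if l = i then poly r (x l) else 0)"
        using i by (intro sum.cong refl) (simp add: hx)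
      also have "\<dots> = poly r (x i)" using i by simp
      finally show ?thesis .
    qed
    then show "t \<in> {t. poly d t = 0}"
      using i by (simp add: d_def poly_sum)
  qed
  have "N + 1 = card (x ` {0..N})" using inj by (simp add: card_image)
  also have "\<dots> \<le> card {t. poly d t = 0}"
    using card_mono[OF poly_roots_finite[OF d0] roots] .
  also have "\<dots> \<le> degree d" by (rule card_poly_roots_bound[OF d0])
  finally show False using dd by simp
qed

lemma brev_eq:
  assumes "x i \<ge> -1"
  shows "brevD_mat K m x h i l = poly (Tk (real K - m) K (h l)) (x i)"
  unfolding brevD_mat_def
proof (rule ext_at[OF _ assms])
  fix y :: real assume y: "y > -1"
  have "(1 + y) powr m * (deriv ^^ K) (\<lambda>s. (1 + s) powr (real K - m) * poly (h l) s) y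
      = (1 + y) powr m * ((1 + y) powr (real K - m - real K) * poly (Tk (real K - m) K (h l)) y)"
    by (simp only: Dk[OF y])
  also have "\<dots> = (1 + y) powr (m + (real K - m - real K)) * poly (Tk (real K - m) K (h l)) y"
    using y by (simp add: powr_add powr_minus)
  also have "\<dots> = poly (Tk (real K - m) K (h l)) y" using y by simp
  finally show "(1 + y) powr m * (deriv ^^ K) (\<lambda>s. (1 + s) powr (real K - m) * poly (h l) s) y
      = poly (Tk (real K - m) K (h l)) y" .
qed

theorem theorem3p3:
  fixes N k :: nat and \<alpha> \<beta> \<mu> :: real
    and x :: "nat \<Rightarrow> real" and h :: "nat \<Rightarrow> real poly"
  assumes "N \<ge> 1" and "\<alpha> > -1" and "\<beta> > -1"
    and "strict_mono_on {0..N} x"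
    and "x ` {0..N} = JGL_nodes N \<alpha> \<beta>"
    and "\<And>j. j \<le> N \<Longrightarrow> degree (h j) \<le> N"
    and "\<And>i j. i \<le> N \<Longrightarrow> j \<le> N \<Longrightarrow> poly (h j) (x i) = (if i = j then 1 else 0)"
    and "k \<ge> 1" and "real k - 1 < \<mu>" and "\<mu> < real k"
  shows "(\<forall>i\<le>N. \<forall>j\<le>N.
            hatD_mat \<mu> x h i j = (\<Sum>l\<le>N. brevD_mat k \<mu> x h i l * hatI_mat (real k - \<mu>) x h l j))
       \<and> (k = 1 \<longrightarrow> (\<forall>i\<le>N. \<forall>j\<le>N.
            brevD_mat 1 \<mu> x h i j =
              (1 - \<mu>) * (if i = j then 1 else 0) + (1 + x i) * deriv (poly (h j)) (x i)))"
proof -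
  have xge: "x i \<ge> -1" if "i \<le> N" for i
  proof -
    have "x i \<in> JGL_nodes N \<alpha> \<beta>" using assms(5) that by auto
    then show ?thesis using JGL_ge assms(1-3) by blast
  qed
  have inj: "inj_on x {0..N}" using assms(4) by (rule strict_mono_on_imp_inj_on)
  define \<nu> where "\<nu> = real k - \<mu>"
  have nu: "\<nu> > 0" using assms(10) by (simp add: \<nu>_def)
  have ceil: "nat \<lceil>\<mu>\<rceil> = k"
  proof -
    have "\<lceil>\<mu>\<rceil> = int k" using assms(9,10) by (simp add: ceiling_eq_iff)
    then show ?thesis by simp
  qed
  define Q where "Q j = Qp \<nu> (h j)" for j
  have hatI: "hatI_mat \<nu> x h l j = poly (Q j) (x l)" if "l \<le> N" for l j
    unfolding hatI_mat_def hat_RL_int_def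
  proof (rule ext_at[OF _ xge[OF that]])
    fix y :: real assume y: "y > -1"
    have "(1 + y) powr - \<nu> * RL_int \<nu> (poly (h j)) y = (1 + y) powr (- \<nu> + \<nu>) * poly (Q j) y"
      using y by (simp add: RL_poly[OF nu y] Q_def powr_add powr_minus)
    then show "(1 + y) powr - \<nu> * RL_int \<nu> (poly (h j)) y = poly (Q j) y" using y by simp
  qed
  have hatD: "hatD_mat \<mu> x h i j = poly (Tk \<nu> k (Q j)) (x i)" if "i \<le> N" for i j
    unfolding hatD_mat_def hat_RL_deriv_def
  proof (rule ext_at[OF _ xge[OF that]])
    fix y :: real assume y: "y > -1"
    have ev: "\<forall>\<^sub>F s in nhds y. RL_int \<nu> (poly (h j)) s = (1 + s) powr \<nu> * poly (Q j) s"
    proof -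
      have "\<forall>\<^sub>F s in nhds y. s \<in> {-1<..}"
        by (rule eventually_nhds_in_open) (use y in auto)
      then show ?thesis by eventually_elim (auto simp: RL_poly[OF nu] Q_def)
    qed
    have "RL_deriv \<mu> (poly (h j)) y = (deriv ^^ k) (RL_int \<nu> (poly (h j))) y"
      unfolding RL_deriv_def ceil \<nu>_def ..
    also have "\<dots> = (deriv ^^ k) (\<lambda>s. (1 + s) powr \<nu> * poly (Q j) s) y"
      by (rule higher_deriv_cong_ev[OF ev refl])
    also have "\<dots> = (1 + y) powr (\<nu> - real k) * poly (Tk \<nu> k (Q j)) y"
      by (rule Dk[OF y])
    finally have "(1 + y) powr \<mu> * RL_deriv \<mu> (poly (h j)) y
        = (1 + y) powr (\<mu> + (\<nu> - real k)) * poly (Tk \<nu> k (Q j)) y"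
      using y by (simp add: powr_add powr_minus)
    also have "\<mu> + (\<nu> - real k) = 0" by (simp add: \<nu>_def)
    finally show "(1 + y) powr \<mu> * RL_deriv \<mu> (poly (h j)) y = poly (Tk \<nu> k (Q j)) y"
      using y by simp
  qed
  have part1: "hatD_mat \<mu> x h i j = (\<Sum>l\<le>N. brevD_mat k \<mu> x h i l * hatI_mat (real k - \<mu>) x h l j)"
    if i: "i \<le> N" and j: "j \<le> N" for i j
  proof -
    have degQ: "degree (Q j) \<le> N"
      unfolding Q_def using degree_Qp[of \<nu> "h j"] assms(6)[OF j] by linarith
    have Qe: "Q j = (\<Sum>l\<le>N. smult (poly (Q j) (x l)) (h l))"
      by (rule interp[OF inj degQ assms(6) assms(7)])
    have "(\<Sum>l\<le>N. brevD_mat k \<mu> x h i l * hatI_mat (real k - \<mu>) x h l j)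
        = (\<Sum>l\<le>N. poly (Tk \<nu> k (h l)) (x i) * poly (Q j) (x l))"
      by (intro sum.cong refl) (simp add: brev_eq[of x i, OF xge[OF i]] hatI[unfolded \<nu>_def] \<nu>_def)
    also have "\<dots> = poly (\<Sum>l\<le>N. smult (poly (Q j) (x l)) (Tk \<nu> k (h l))) (x i)"
      by (simp add: poly_sum mult.commute)
    also have "\<dots> = poly (Tk \<nu> k (Q j)) (x i)"
      by (subst (2) Qe) (simp add: Tk_sum)
    finally show ?thesis by (simp add: hatD[OF i])
  qed
  have part2: "brevD_mat 1 \<mu> x h i j =
              (1 - \<mu>) * (if i = j then 1 else 0) + (1 + x i) * deriv (poly (h j)) (x i)"
    if i: "i \<le> N" and j: "j \<le> N" for i j
  proof -
    have "brevD_mat 1 \<mu> x h i j = poly (Tk (real 1 - \<mu>) 1 (h j)) (x i)"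
      by (rule brev_eq[of x i, OF xge[OF i]])
    also have "\<dots> = (1 - \<mu>) * poly (h j) (x i) + (1 + x i) * poly (pderiv (h j)) (x i)"
      by (simp add: T_def algebra_simps)
    also have "poly (pderiv (h j)) (x i) = deriv (poly (h j)) (x i)"
      by (rule DERIV_imp_deriv[OF poly_DERIV, symmetric])
    finally show ?thesis using assms(7)[OF i j] by simp
  qed
  show ?thesis using part1 part2 by blast
qed

end
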